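(* The Finsleroid Indicatrix $\{R\in V_N: K(g;R)=1\}$ is a closed (compact, without boundary), regular hypersurface of $V_N$, and it is strongly convex, i.e. it bounds a convex body and its second fundamental form (with respect to the inward normal and the Euclidean structure of $V_N$) is positive definite at every point.
   Context: Let $N\ge2$, $V_N=\mathbb{R}^N$ with points $R=(R^1,\dots,R^N)$, $Z=R^N$; indices $a,b$ run over $1,\dots,N-1$, repeated indices summed. Fix a symmetric positive-definite matrix $(r_{ab})$, $q(R)=\sqrt{r_{ab}R^aR^b}$. Fix $g\in(-2,2)$, $h=\sqrt{1-g^2/4}$, $G=g/h$. Define $B(g;R)=Z^2+gqZ+q^2$, $A(g;R)=Z+\frac12gq$, $\Phi(g;R)=\arctan(A/(hq))$ for $q>0$ ($\Phi=\pm\pi/2$ if $q=0$, $Z\gtrless0$), $J=e^{\frac12G\Phi}$, and the Finsleroid metric function $K(g;R)=\sqrt{B}\,J$ ($K(g;0)=0$). *)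

theory Defs
  imports "HOL-Analysis.Analysis"
begin

text \<open>Setting: V_N = real^'n with N = CARD('n) >= 2. A distinguished index z :: 'n
  plays the role of the coordinate R^N = Z; the remaining indices (the set -{z})
  play the role of a, b = 1..N-1. The matrix (r_ab) is r :: 'n => 'n => real,
  only used on indices different from z.\<close>

definition sym_posdef_off :: "'n \<Rightarrow> ('n::finite \<Rightarrow> 'n \<Rightarrow> real) \<Rightarrow> bool" where
  "sym_posdef_off z r \<longleftrightarrow>
     (\<forall>a b. a \<noteq> z \<longrightarrow> b \<noteq> z \<longrightarrow> r a b = r b a) \<and>
     (\<forall>x::'n \<Rightarrow> real. (\<exists>a. a \<noteq> z \<and> x a \<noteq> 0) \<longrightarrow>
        (\<Sum>a\<in>-{z}. \<Sum>b\<in>-{z}. r a b * x a * x b) > 0)"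

definition fq :: "'n \<Rightarrow> ('n::finite \<Rightarrow> 'n \<Rightarrow> real) \<Rightarrow> real^'n \<Rightarrow> real" where
  "fq z r R = sqrt (\<Sum>a\<in>-{z}. \<Sum>b\<in>-{z}. r a b * R$a * R$b)"

definition fh :: "real \<Rightarrow> real" where "fh g = sqrt (1 - g\<^sup>2 / 4)"
definition fG :: "real \<Rightarrow> real" where "fG g = g / fh g"

definition fB :: "'n \<Rightarrow> ('n::finite \<Rightarrow> 'n \<Rightarrow> real) \<Rightarrow> real \<Rightarrow> real^'n \<Rightarrow> real" where
  "fB z r g R = (R$z)\<^sup>2 + g * fq z r R * R$z + (fq z r R)\<^sup>2"

definition fA :: "'n \<Rightarrow> ('n::finite \<Rightarrow> 'n \<Rightarrow> real) \<Rightarrow> real \<Rightarrow> real^'n \<Rightarrow> real" where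
  "fA z r g R = R$z + g * fq z r R / 2"

definition fPhi :: "'n \<Rightarrow> ('n::finite \<Rightarrow> 'n \<Rightarrow> real) \<Rightarrow> real \<Rightarrow> real^'n \<Rightarrow> real" where
  "fPhi z r g R =
     (if fq z r R > 0 then arctan (fA z r g R / (fh g * fq z r R))
      else if R$z > 0 then pi / 2 else - (pi / 2))"

definition fJ :: "'n \<Rightarrow> ('n::finite \<Rightarrow> 'n \<Rightarrow> real) \<Rightarrow> real \<Rightarrow> real^'n \<Rightarrow> real" where
  "fJ z r g R = exp (fG g * fPhi z r g R / 2)"

definition finsleroid_K :: "'n \<Rightarrow> ('n::finite \<Rightarrow> 'n \<Rightarrow> real) \<Rightarrow> real \<Rightarrow> real^'n \<Rightarrow> real" where
  "finsleroid_K z r g R = (if R = 0 then 0 else sqrt (fB z r g R) * fJ z r g R)"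

text \<open>Second fundamental form of a level set {F = c} at x, in direction of a tangent
  vector v, with respect to the unit normal -(grad F x)/|grad F x| and the Euclidean
  structure, where grad is the gradient of F and hess x the Jacobian matrix of grad
  at x (the Hessian of F): II(v,v) = v . (Hess F v) / |grad F|.\<close>
definition level_sff :: "(real^'n \<Rightarrow> real^'n) \<Rightarrow> (real^'n \<Rightarrow> real^'n^'n) \<Rightarrow> real^'n \<Rightarrow> real^'n \<Rightarrow> real" where
  "level_sff grad hess x v = (v \<bullet> (hess x *v v)) / norm (grad x)"

end

theory Submission
  imports Defs
begin

lemma GL:
  fixes f :: "real^'n \<Rightarrow> 'b::real_normed_vector" and T :: "real^'n \<Rightarrow> 'c::real_normed_vector"
  assumes lin: "linear T" and Tx0: "T x0 = 0" and w: "T w \<noteq> 0"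
   and U: "open U" "x0 \<in> U" and cont: "continuous_on U f"
   and der: "\<And>x. x \<in> U \<Longrightarrow> T x \<noteq> 0 \<Longrightarrow> (f has_derivative D x) (at x)"
   and blD: "bounded_linear (D x0)"
   and unif: "\<And>e. e>0 \<Longrightarrow> \<exists>d>0. \<forall>x\<in>U. T x \<noteq> 0 \<longrightarrow> norm (x - x0) < d \<longrightarrow> (\<forall>v. norm (D x v - D x0 v) \<le> e * norm v)"
  shows "(f has_derivative D x0) (at x0)"
  unfolding has_derivative_at_alt
proof (intro conjI blD allI impI)
  fix e :: real assume e: "e > 0"
  obtain d1 where d1: "d1 > 0" "\<forall>x\<in>U. T x \<noteq> 0 \<longrightarrow> norm (x - x0) < d1 \<longrightarrow> (\<forall>v. norm (D x v - D x0 v) \<le> e * norm v)"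
    using unif[OF e] by blast
  obtain d2 where d2: "d2 > 0" "ball x0 d2 \<subseteq> U" using U open_contains_ball by blast
  define d where "d = min d1 d2"
  have dpos: "d > 0" using d1 d2 by (simp add: d_def)
  have good: "norm (f (x0 + h) - f x0 - D x0 h) \<le> e * norm h" if h: "norm h < d" "T h \<noteq> 0" for h
  proof -
    define \<phi> where "\<phi> t = f (x0 + t *\<^sub>R h) - t *\<^sub>R D x0 h" for t
    have inU: "x0 + t *\<^sub>R h \<in> U" if "0 \<le> t" "t \<le> 1" for t
    proof -
      have "norm (t *\<^sub>R h) \<le> norm h" using that by (simp add: mult_left_le_one_le)
      hence "dist x0 (x0 + t *\<^sub>R h) < d2" using h d_def by (simp add: dist_norm)
      thus ?thesis using d2 by auto
    qed
    have c1: "continuous_on {0..1} (\<lambda>t. x0 + t *\<^sub>R h)" by (intro continuous_intros)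
    have "continuous_on {0..1} (f \<circ> (\<lambda>t. x0 + t *\<^sub>R h))"
      by (rule continuous_on_compose[OF c1]) (rule continuous_on_subset[OF cont], use inU in auto)
    hence cphi: "continuous_on {0..1} \<phi>" unfolding \<phi>_def o_def by (intro continuous_intros) auto
    have dphi: "(\<phi> has_vector_derivative (D (x0 + t *\<^sub>R h) h - D x0 h)) (at t)" if t: "0 < t" "t < 1" for t
    proof -
      have Tt: "T (x0 + t *\<^sub>R h) \<noteq> 0" using t h(2) lin Tx0 by (simp add: linear_add linear_scale)
      have df: "(f has_derivative D (x0 + t *\<^sub>R h)) (at (x0 + t *\<^sub>R h))" using der[OF inU Tt] t by simp
      have bl: "bounded_linear (D (x0 + t *\<^sub>R h))" using df has_derivative_bounded_linear by blast
      have "((\<lambda>t. x0 + t *\<^sub>R h) has_derivative (\<lambda>s. s *\<^sub>R h)) (at t)"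
        by (auto intro!: derivative_eq_intros)
      from has_derivative_compose[OF this df]
      have "((\<lambda>t. f (x0 + t *\<^sub>R h)) has_derivative (\<lambda>s. D (x0 + t *\<^sub>R h) (s *\<^sub>R h))) (at t)" .
      hence "((\<lambda>t. f (x0 + t *\<^sub>R h)) has_derivative (\<lambda>s. s *\<^sub>R D (x0 + t *\<^sub>R h) h)) (at t)"
        using bounded_linear.linear[OF bl] by (simp add: linear_scale)
      moreover have "((\<lambda>t. t *\<^sub>R D x0 h) has_derivative (\<lambda>s. s *\<^sub>R D x0 h)) (at t)"
        by (auto intro!: derivative_eq_intros)
      ultimately have "(\<phi> has_derivative (\<lambda>s. s *\<^sub>R D (x0 + t *\<^sub>R h) h - s *\<^sub>R D x0 h)) (at t)"
        unfolding \<phi>_def by (rule has_derivative_diff)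
      thus ?thesis unfolding has_vector_derivative_def by (simp add: scaleR_diff_right)
    qed
    have bnd: "norm (D (x0 + t *\<^sub>R h) h - D x0 h) \<le> e * norm h" if t: "0 < t" "t < 1" for t
    proof -
      have Tt: "T (x0 + t *\<^sub>R h) \<noteq> 0" using t h(2) lin Tx0 by (simp add: linear_add linear_scale)
      have "norm (t *\<^sub>R h) \<le> norm h" using t by (simp add: mult_left_le_one_le)
      hence "norm (x0 + t *\<^sub>R h - x0) < d1" using h d_def by simp
      thus ?thesis using d1(2) inU[of t] t Tt by auto
    qed
    have "norm (\<phi> 1 - \<phi> 0) \<le> (e * norm h) * 1 - (e * norm h) * 0"
      apply (rule differentiable_bound_general[where \<phi>="\<lambda>t. (e * norm h) * t" and \<phi>'="\<lambda>t. e * norm h"])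
      using cphi dphi bnd by (auto intro!: continuous_intros derivative_eq_intros)
    thus ?thesis by (simp add: \<phi>_def algebra_simps)
  qed
  show "\<exists>d>0. \<forall>y. norm (y - x0) < d \<longrightarrow> norm (f y - f x0 - D x0 (y - x0)) \<le> e * norm (y - x0)"
  proof (intro exI[of _ d] conjI dpos allI impI)
    fix y assume y: "norm (y - x0) < d"
    define h where "h = y - x0"
    show "norm (f y - f x0 - D x0 (y - x0)) \<le> e * norm (y - x0)"
    proof (cases "T h = 0")
      case False thus ?thesis using good[of h] y by (simp add: h_def)
    next
      case True
      have yU: "y \<in> U" using y d2 d_def by (auto simp: dist_norm norm_minus_commute)
      have icf: "isCont f y" using cont U yU continuous_on_eq_continuous_at by blast
      have ic0: "isCont (\<lambda>s::real. y + s *\<^sub>R w) 0" by (intro continuous_intros)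
      have ic: "isCont (\<lambda>s::real. f (y + s *\<^sub>R w)) 0"
        using isCont_o2[OF ic0, of f] icf by simp
      have icD: "isCont (D x0) z" for z using blD by (simp add: linear_continuous_at)
      have "isCont (\<lambda>s::real. norm (f (y + s *\<^sub>R w) - f x0 - D x0 (y + s *\<^sub>R w - x0)) - e * norm (y + s *\<^sub>R w - x0)) 0"
        by (intro continuous_intros ic isCont_o2[OF _ icD])
      hence lim: "((\<lambda>s::real. norm (f (y + s *\<^sub>R w) - f x0 - D x0 (y + s *\<^sub>R w - x0)) - e * norm (y + s *\<^sub>R w - x0))
          \<longlongrightarrow> norm (f y - f x0 - D x0 (y - x0)) - e * norm (y - x0)) (at_right 0)"
        unfolding isCont_def by (auto intro: tendsto_mono[OF at_le])
      have wpos: "norm w > 0" using w lin linear_0 by fastforce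
      define \<delta> where "\<delta> = (d - norm h) / norm w"
      have dp: "\<delta> > 0" using y wpos by (simp add: \<delta>_def h_def)
      have ev: "eventually (\<lambda>s::real. 0 < s \<and> s < \<delta>) (at_right 0)"
        using dp by (auto simp: eventually_at_right_field)
      have "eventually (\<lambda>s::real. norm (f (y + s *\<^sub>R w) - f x0 - D x0 (y + s *\<^sub>R w - x0)) - e * norm (y + s *\<^sub>R w - x0) \<le> 0) (at_right 0)"
        using ev
      proof (rule eventually_mono)
        fix s :: real assume s: "0 < s \<and> s < \<delta>"
        have "norm (h + s *\<^sub>R w) \<le> norm h + s * norm w" using s by (smt (verit) norm_scaleR norm_triangle_ineq)
        also have "\<dots> < d" using s wpos by (simp add: \<delta>_def field_simps)
        finally have n: "norm (h + s *\<^sub>R w) < d" .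
        have "T (h + s *\<^sub>R w) \<noteq> 0" using True s w lin by (simp add: linear_add linear_scale)
        from good[OF n this] show "norm (f (y + s *\<^sub>R w) - f x0 - D x0 (y + s *\<^sub>R w - x0)) - e * norm (y + s *\<^sub>R w - x0) \<le> 0"
          by (simp add: h_def algebra_simps)
      qed
      from tendsto_upperbound[OF lim this] have "norm (f y - f x0 - D x0 (y - x0)) - e * norm (y - x0) \<le> 0"
        by simp
      thus ?thesis by simp
    qed
  qed
qed

locale fins =
  fixes z :: "'n::finite" and r :: "'n \<Rightarrow> 'n \<Rightarrow> real" and g :: real
  assumes sp: "sym_posdef_off z r" and gl: "-2 < g" and gu: "g < 2" and card: "CARD('n) \<ge> 2"
begin

definition bl :: "real^'n \<Rightarrow> real^'n \<Rightarrow> real" where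
  "bl x y = (\<Sum>a\<in>-{z}. \<Sum>b\<in>-{z}. r a b * x$a * y$b)"

definition pv :: "real^'n \<Rightarrow> real^'n" where
  "pv x = (\<chi> i. if i = z then 0 else \<Sum>b\<in>-{z}. r i b * x$b)"

lemma rsym: "a \<noteq> z \<Longrightarrow> b \<noteq> z \<Longrightarrow> r a b = r b a"
  using sp unfolding sym_posdef_off_def by blast

lemma bl_sym: "bl x y = bl y x"
proof -
  have "bl x y = (\<Sum>b\<in>-{z}. \<Sum>a\<in>-{z}. r a b * x$a * y$b)" unfolding bl_def by (rule sum.swap)
  also have "\<dots> = bl y x" unfolding bl_def
    by (intro sum.cong refl) (simp add: rsym mult.commute mult.left_commute)
  finally show ?thesis .
qed

lemma bl_lin_left: "bl (a *\<^sub>R x + b *\<^sub>R y) w = a * bl x w + b * bl y w"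
  unfolding bl_def by (simp add: algebra_simps sum.distrib sum_distrib_left)

lemma bl_lin_right: "bl w (a *\<^sub>R x + b *\<^sub>R y) = a * bl w x + b * bl w y"
  using bl_lin_left bl_sym by metis

lemma bl_scale_left: "bl (a *\<^sub>R x) w = a * bl x w"
  using bl_lin_left[of a x 0 x w] by simp

lemma bl_scale_right: "bl w (a *\<^sub>R x) = a * bl w x"
  using bl_scale_left bl_sym by metis

lemma bl_diff_left: "bl (x - y) w = bl x w - bl y w"
  using bl_lin_left[of 1 x "-1" y w] by simp

lemma bl_diff_right: "bl w (x - y) = bl w x - bl w y"
  using bl_diff_left bl_sym by metis

lemma bl_add_left: "bl (x + y) w = bl x w + bl y w"
  using bl_lin_left[of 1 x 1 y w] by simp

lemma bl_add_right: "bl w (x + y) = bl w x + bl w y"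
  using bl_add_left bl_sym by metis

lemma bl_pos: "(\<exists>a. a \<noteq> z \<and> x$a \<noteq> 0) \<Longrightarrow> bl x x > 0"
  using sp unfolding sym_posdef_off_def bl_def
  by (metis (no_types, lifting) sum.cong)

lemma bl_zero_if: "(\<forall>a. a \<noteq> z \<longrightarrow> x$a = 0) \<Longrightarrow> bl x y = 0"
  unfolding bl_def by (intro sum.neutral) auto

lemma bl_nonneg: "bl x x \<ge> 0"
  using bl_pos[of x] bl_zero_if[of x x] by force

lemma bl_zero_iff: "bl x x = 0 \<longleftrightarrow> (\<forall>a. a \<noteq> z \<longrightarrow> x$a = 0)"
  using bl_pos[of x] bl_zero_if[of x x] by force

lemma bl_CS: "(bl x y)\<^sup>2 \<le> bl x x * bl y y"
proof (cases "bl y y = 0")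
  case True
  hence "bl x y = 0" using bl_zero_iff bl_zero_if bl_sym by metis
  thus ?thesis using True by simp
next
  case False
  hence yp: "bl y y > 0" using bl_nonneg[of y] by simp
  define t where "t = bl x y / bl y y"
  have "0 \<le> bl (x - t *\<^sub>R y) (x - t *\<^sub>R y)" by (rule bl_nonneg)
  also have "\<dots> = bl x x - 2 * t * bl x y + t^2 * bl y y"
    by (simp add: bl_diff_left bl_diff_right bl_scale_left bl_scale_right bl_sym[of y x] power2_eq_square algebra_simps)
  also have "\<dots> = bl x x - (bl x y)^2 / bl y y" using yp by (simp add: t_def field_simps power2_eq_square)
  finally show ?thesis using yp by (simp add: field_simps)
qed

lemma bl_CS_abs: "\<bar>bl x y\<bar> \<le> sqrt (bl x x) * sqrt (bl y y)"
  using bl_CS[of x y] by (metis real_sqrt_abs real_sqrt_le_mono real_sqrt_mult)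

lemma pv_inner: "pv x \<bullet> y = bl x y"
proof -
  have "pv x \<bullet> y = (\<Sum>i\<in>UNIV. (pv x)$i * y$i)" by (simp add: inner_vec_def)
  also have "\<dots> = (\<Sum>i\<in>-{z}. (pv x)$i * y$i)"
    by (rule sum.mono_neutral_right) (auto simp: pv_def)
  also have "\<dots> = (\<Sum>i\<in>-{z}. \<Sum>b\<in>-{z}. r i b * x$b * y$i)"
    by (intro sum.cong refl) (auto simp: pv_def sum_distrib_right)
  also have "\<dots> = bl y x" unfolding bl_def by (intro sum.cong refl) (simp add: mult.commute mult.left_commute)
  finally show ?thesis by (simp add: bl_sym)
qed

lemma inner_pv: "y \<bullet> pv x = bl x y"
  using pv_inner by (simp add: inner_commute)

lemma pv_z[simp]: "pv x $ z = 0" by (simp add: pv_def)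

lemma linear_pv: "linear pv"
  by (rule linearI) (auto simp: pv_def vec_eq_iff algebra_simps sum.distrib sum_distrib_left)

lemma pv_zero_if: "(\<forall>a. a \<noteq> z \<longrightarrow> x$a = 0) \<Longrightarrow> pv x = 0"
  unfolding pv_def vec_eq_iff by (auto intro!: sum.neutral)

lemma pv_comp_bound: "\<bar>pv x $ i\<bar> \<le> sqrt (bl (axis i 1) (axis i 1)) * sqrt (bl x x)"
proof -
  have "pv x $ i = pv x \<bullet> axis i 1" by (simp add: inner_axis)
  also have "\<dots> = bl (axis i 1) x" by (simp add: pv_inner bl_sym)
  finally show ?thesis using bl_CS_abs by simp
qed

end

context fins begin

abbreviation "q \<equiv> fq z r"
abbreviation "B \<equiv> fB z r g"
abbreviation "A \<equiv> fA z r g"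
abbreviation "Phi \<equiv> fPhi z r g"
abbreviation "J \<equiv> fJ z r g"
abbreviation "K \<equiv> finsleroid_K z r g"
abbreviation "h \<equiv> fh g"
abbreviation "G \<equiv> fG g"

lemma q_eq: "q x = sqrt (bl x x)"
  unfolding fq_def bl_def ..

lemma q_nonneg: "q x \<ge> 0" by (simp add: q_eq bl_nonneg)

lemma q_sq: "(q x)\<^sup>2 = bl x x" using bl_nonneg by (simp add: q_eq)

lemma q_zero_iff: "q x = 0 \<longleftrightarrow> (\<forall>a. a \<noteq> z \<longrightarrow> x$a = 0)"
  using bl_zero_iff by (simp add: q_eq)

lemma nonzero_cases: "x \<noteq> 0 \<Longrightarrow> q x > 0 \<or> x$z \<noteq> 0"
  using q_zero_iff[of x] q_nonneg[of x] by (metis less_eq_real_def vec_eq_iff zero_index)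

lemma h_sq: "h\<^sup>2 = 1 - g\<^sup>2/4"
proof -
  have "(2 - g) * (2 + g) > 0" using gl gu by simp
  hence "g\<^sup>2 < 4" by (simp add: algebra_simps power2_eq_square)
  thus ?thesis unfolding fh_def by simp
qed

lemma h_pos: "h > 0"
proof -
  have "(2 - g) * (2 + g) > 0" using gl gu by simp
  hence "g\<^sup>2 < 4" by (simp add: algebra_simps power2_eq_square)
  thus ?thesis unfolding fh_def by simp
qed

lemma Gh: "G * h = g" using h_pos unfolding fG_def by simp

lemma B_eq: "B x = (A x)\<^sup>2 + h\<^sup>2 * (q x)\<^sup>2"
  unfolding fB_def fA_def h_sq by (simp add: power2_eq_square field_simps)

lemma B_lower: "B x \<ge> (1 - \<bar>g\<bar>/2) * ((x$z)\<^sup>2 + (q x)\<^sup>2)"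
proof -
  have qn: "q x \<ge> 0" by (rule q_nonneg)
  have "\<bar>g * q x * x$z\<bar> \<le> \<bar>g\<bar>/2 * ((x$z)\<^sup>2 + (q x)\<^sup>2)"
  proof -
    have "2 * \<bar>q x * x$z\<bar> \<le> (x$z)\<^sup>2 + (q x)\<^sup>2"
    proof -
      have "0 \<le> (\<bar>x$z\<bar> - q x)\<^sup>2" by simp
      thus ?thesis using qn by (simp add: power2_eq_square algebra_simps abs_mult)
    qed
    hence "\<bar>g\<bar> * (2 * \<bar>q x * x$z\<bar>) \<le> \<bar>g\<bar> * ((x$z)\<^sup>2 + (q x)\<^sup>2)" by (simp add: mult_left_mono)
    thus ?thesis by (simp add: abs_mult field_simps)
  qed
  thus ?thesis unfolding fB_def by (simp add: algebra_simps)
qed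

lemma B_pos: "x \<noteq> 0 \<Longrightarrow> B x > 0"
proof -
  assume "x \<noteq> 0"
  hence "(x$z)\<^sup>2 + (q x)\<^sup>2 > 0"
  proof (cases "q x > 0")
    case True thus ?thesis by (simp add: add_nonneg_pos)
  next
    case False thus ?thesis using nonzero_cases[OF \<open>x \<noteq> 0\<close>] by (simp add: add_pos_nonneg)
  qed
  moreover have "1 - \<bar>g\<bar>/2 > 0" using gl gu by simp
  ultimately have "(1 - \<bar>g\<bar>/2) * ((x$z)\<^sup>2 + (q x)\<^sup>2) > 0" by simp
  thus ?thesis using B_lower[of x] by linarith
qed

lemma B_nonneg: "B x \<ge> 0"
proof -
  have "(1 - \<bar>g\<bar>/2) * ((x$z)\<^sup>2 + (q x)\<^sup>2) \<ge> 0" using gl gu by simp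
  thus ?thesis using B_lower[of x] by linarith
qed

lemma A_q0: "q x = 0 \<Longrightarrow> A x = x$z" by (simp add: fA_def)

lemma B_q0: "q x = 0 \<Longrightarrow> B x = (x$z)\<^sup>2" by (simp add: fB_def)

lemma cos_Phi: "x \<noteq> 0 \<Longrightarrow> cos (Phi x) = h * q x / sqrt (B x)"
proof -
  assume x: "x \<noteq> 0"
  show ?thesis
  proof (cases "q x > 0")
    case True
    have hq: "h * q x > 0" using True h_pos by simp
    have "1 + (A x / (h * q x))\<^sup>2 = B x / (h * q x)\<^sup>2"
      using True h_pos by (simp add: B_eq field_simps power2_eq_square)
    hence "sqrt (1 + (A x / (h * q x))\<^sup>2) = sqrt (B x) / (h * q x)"
      using hq by (simp add: real_sqrt_divide)
    thus ?thesis using True hq B_pos[OF x] unfolding fPhi_def by (simp add: cos_arctan)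
  next
    case False
    hence "q x = 0" using q_nonneg[of x] by simp
    thus ?thesis unfolding fPhi_def by simp
  qed
qed

lemma sin_Phi: "x \<noteq> 0 \<Longrightarrow> sin (Phi x) = A x / sqrt (B x)"
proof -
  assume x: "x \<noteq> 0"
  show ?thesis
  proof (cases "q x > 0")
    case True
    have hq: "h * q x > 0" using True h_pos by simp
    have "1 + (A x / (h * q x))\<^sup>2 = B x / (h * q x)\<^sup>2"
      using True h_pos by (simp add: B_eq field_simps power2_eq_square)
    hence "sqrt (1 + (A x / (h * q x))\<^sup>2) = sqrt (B x) / (h * q x)"
      using hq by (simp add: real_sqrt_divide)
    thus ?thesis using True hq h_pos B_pos[OF x] unfolding fPhi_def by (simp add: sin_arctan)
  next
    case False
    hence q0: "q x = 0" using q_nonneg[of x] by simp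
    hence "x$z \<noteq> 0" using nonzero_cases[OF x] by auto
    thus ?thesis using q0 unfolding fPhi_def by (auto simp: A_q0 B_q0)
  qed
qed

lemma Phi_bounds: "- (pi/2) \<le> Phi x \<and> Phi x \<le> pi/2"
  unfolding fPhi_def using arctan_bounded by (auto simp: less_imp_le)

lemma K_eq: "K x = sqrt (B x) * J x"
  unfolding finsleroid_K_def by (auto simp: fB_def fq_def)

lemma J_pos: "J x > 0" by (simp add: fJ_def)

lemma K_pos: "x \<noteq> 0 \<Longrightarrow> K x > 0"
  using B_pos J_pos K_eq by simp

lemma Phi_alt_pos: "A x > 0 \<Longrightarrow> Phi x = pi/2 - arctan (h * q x / A x)"
proof -
  assume Ap: "A x > 0"
  show ?thesis
  proof (cases "q x > 0")
    case True
    have "arctan (1 / (h * q x / A x)) = sgn (h * q x / A x) * pi/2 - arctan (h * q x / A x)"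
      using True Ap h_pos by (intro Transcendental.arctan_inverse) simp
    thus ?thesis using True Ap h_pos unfolding fPhi_def by simp
  next
    case False
    hence q0: "q x = 0" using q_nonneg[of x] by simp
    thus ?thesis using Ap A_q0[OF q0] unfolding fPhi_def by simp
  qed
qed

lemma Phi_alt_neg: "A x < 0 \<Longrightarrow> Phi x = - (pi/2) - arctan (h * q x / A x)"
proof -
  assume Ap: "A x < 0"
  show ?thesis
  proof (cases "q x > 0")
    case True
    have "h * q x / A x < 0" using True Ap h_pos by (simp add: divide_pos_neg)
    hence "arctan (1 / (h * q x / A x)) = sgn (h * q x / A x) * pi/2 - arctan (h * q x / A x)"
      using True Ap h_pos by (intro Transcendental.arctan_inverse) simp
    thus ?thesis using True Ap h_pos \<open>h * q x / A x < 0\<close> unfolding fPhi_def by simp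
  next
    case False
    hence q0: "q x = 0" using q_nonneg[of x] by simp
    thus ?thesis using Ap A_q0[OF q0] unfolding fPhi_def by simp
  qed
qed

end

lemma cos_sin_exp_ineq:
  fixes k d :: real
  assumes "-pi \<le> d" "d \<le> pi"
  shows "cos d + k * sin d \<le> exp (k * d)"
proof -
  define f where "f t = exp (- k * t) * (cos t + k * sin t)" for t
  have der: "DERIV f t :> - exp (- k * t) * (1 + k\<^sup>2) * sin t" for t
    unfolding f_def
    by (auto intro!: derivative_eq_intros simp: power2_eq_square algebra_simps)
  have "f d \<le> f 0"
  proof (cases "d \<ge> 0")
    case True
    show ?thesis
    proof (rule DERIV_nonpos_imp_nonincreasing[where f=f and a=0 and b=d, OF True])
      fix t assume t: "0 \<le> t" "t \<le> d"
      have "sin t \<ge> 0" using t assms by (intro sin_ge_zero) auto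
      moreover have "exp (- k * t) * (1 + k\<^sup>2) \<ge> 0" by (simp add: add_nonneg_nonneg)
      ultimately show "\<exists>y. DERIV f t :> y \<and> y \<le> 0" using der[of t]
        by (intro exI[of _ "- exp (- k * t) * (1 + k\<^sup>2) * sin t"]) (simp add: mult_nonneg_nonneg)
    qed
  next
    case False
    show ?thesis
    proof (rule DERIV_nonneg_imp_nondecreasing[where f=f and a=d and b=0])
      show "d \<le> 0" using False by simp
      fix t assume t: "d \<le> t" "t \<le> 0"
      have "sin (-t) \<ge> 0" using t assms by (intro sin_ge_zero) auto
      hence "sin t \<le> 0" by simp
      moreover have "exp (- k * t) * (1 + k\<^sup>2) \<ge> 0" by (simp add: add_nonneg_nonneg)
      ultimately show "\<exists>y. DERIV f t :> y \<and> y \<ge> 0" using der[of t]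
        by (intro exI[of _ "- exp (- k * t) * (1 + k\<^sup>2) * sin t"]) (simp add: mult_nonneg_nonpos)
    qed
  qed
  hence "exp (- k * d) * (cos d + k * sin d) \<le> 1" by (simp add: f_def)
  hence le1: "exp (- k * d) * (cos d + k * sin d) \<le> 1" .
  have ee: "exp (k * d) * exp (- k * d) = 1" by (simp add: exp_minus)
  have "cos d + k * sin d = exp (k * d) * (exp (- k * d) * (cos d + k * sin d))"
    unfolding mult.assoc[symmetric] ee by simp
  also have "\<dots> \<le> exp (k * d) * 1" using le1 by (intro mult_left_mono) auto
  finally show ?thesis by simp
qed

context fins begin

definition ez :: "real^'n" where "ez = axis z 1"
definition Wv :: "real^'n \<Rightarrow> real^'n" where "Wv x = pv x + (x$z + g * q x) *\<^sub>R ez"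
definition grad :: "real^'n \<Rightarrow> real^'n" where "grad x = (K x / B x) *\<^sub>R Wv x"

lemma inner_ez: "y \<bullet> ez = y$z" by (simp add: ez_def inner_axis)
lemma ez_inner: "ez \<bullet> y = y$z" by (simp add: ez_def inner_axis')

lemma Wv_inner: "Wv x \<bullet> y = bl x y + (x$z + g * q x) * y$z"
  by (simp add: Wv_def inner_add_left pv_inner ez_inner)

lemma inner_Wv: "y \<bullet> Wv x = bl x y + (x$z + g * q x) * y$z"
  using Wv_inner by (simp add: inner_commute)

lemma Wv_self: "x \<bullet> Wv x = B x"
  by (simp add: inner_Wv fB_def q_sq[symmetric] power2_eq_square algebra_simps)

lemma euler: "x \<noteq> 0 \<Longrightarrow> x \<bullet> grad x = K x"
  using B_pos[of x] by (simp add: grad_def Wv_self)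

lemma K_zero: "K 0 = 0" by (simp add: finsleroid_K_def)

lemma K_nonneg: "K x \<ge> 0"
  using K_pos[of x] K_zero by (cases "x = 0") auto

lemma hq_cos: "x \<noteq> 0 \<Longrightarrow> h * q x = sqrt (B x) * cos (Phi x)"
  using cos_Phi[of x] B_pos[of x] by simp

lemma A_sin: "x \<noteq> 0 \<Longrightarrow> A x = sqrt (B x) * sin (Phi x)"
  using sin_Phi[of x] B_pos[of x] by simp

lemma support: assumes x0: "x0 \<noteq> 0" shows "x \<bullet> grad x0 \<le> K x"
proof (cases "x = 0")
  case True thus ?thesis using K_zero by simp
next
  case False
  have kp: "K x0 / B x0 > 0" using K_pos[OF x0] B_pos[OF x0] by simp
  have "x \<bullet> grad x0 = (K x0 / B x0) * (bl x0 x + (x0$z + g * q x0) * x$z)"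
    by (simp add: grad_def inner_Wv)
  also have "\<dots> \<le> (K x0 / B x0) * (q x0 * q x + (x0$z + g * q x0) * x$z)"
  proof -
    have "bl x0 x \<le> q x0 * q x" using bl_CS_abs[of x0 x] by (simp add: q_eq)
    hence "bl x0 x + (x0$z + g * q x0) * x$z \<le> q x0 * q x + (x0$z + g * q x0) * x$z" by simp
    thus ?thesis using kp by (intro mult_left_mono) auto
  qed
  also have "q x0 * q x + (x0$z + g * q x0) * x$z
      = (h * q x0) * (h * q x) + A x0 * A x + (G/2) * ((h * q x0) * A x - A x0 * (h * q x))"
  proof -
    have "(G/2) * ((h * q x0) * A x - A x0 * (h * q x)) = (G * h/2) * (q x0 * A x - A x0 * q x)"
      by (simp add: algebra_simps)
    also have "\<dots> = (g/2) * (q x0 * x$z - x0$z * q x)" by (simp add: Gh fA_def algebra_simps)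
    finally have e1: "(G/2) * ((h * q x0) * A x - A x0 * (h * q x)) = (g/2) * (q x0 * x$z - x0$z * q x)" .
    have e2: "(h * q x0) * (h * q x) = h\<^sup>2 * (q x0 * q x)" by (simp add: power2_eq_square algebra_simps)
    show ?thesis unfolding e1 e2 h_sq by (simp add: fA_def power2_eq_square algebra_simps)
  qed
  also have "\<dots> = sqrt (B x0) * sqrt (B x) * (cos (Phi x - Phi x0) + (G/2) * sin (Phi x - Phi x0))"
    unfolding hq_cos[OF x0] hq_cos[OF False] A_sin[OF x0] A_sin[OF False] cos_diff sin_diff
    by (simp add: algebra_simps)
  also have "(K x0 / B x0) * (sqrt (B x0) * sqrt (B x) * (cos (Phi x - Phi x0) + (G/2) * sin (Phi x - Phi x0)))
     = (J x0 * sqrt (B x)) * (cos (Phi x - Phi x0) + (G/2) * sin (Phi x - Phi x0))"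
  proof -
    have s: "sqrt (B x0) * sqrt (B x0) = B x0" using B_nonneg[of x0] by simp
    have "K x0 / B x0 * sqrt (B x0) = J x0 * (sqrt (B x0) * sqrt (B x0)) / B x0"
      by (simp add: K_eq)
    also have "\<dots> = J x0" using s B_pos[OF x0] by simp
    finally have kj: "K x0 / B x0 * sqrt (B x0) = J x0" .
    have "(K x0 / B x0) * (sqrt (B x0) * sqrt (B x) * (cos (Phi x - Phi x0) + (G/2) * sin (Phi x - Phi x0)))
      = (K x0 / B x0 * sqrt (B x0)) * sqrt (B x) * (cos (Phi x - Phi x0) + (G/2) * sin (Phi x - Phi x0))"
      by (simp only: mult.assoc)
    thus ?thesis unfolding kj by simp
  qed
  also have "\<dots> \<le> (J x0 * sqrt (B x)) * exp ((G/2) * (Phi x - Phi x0))"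
  proof (rule mult_left_mono)
    show "cos (Phi x - Phi x0) + G / 2 * sin (Phi x - Phi x0) \<le> exp (G / 2 * (Phi x - Phi x0))"
      using Phi_bounds[of x] Phi_bounds[of x0] by (intro cos_sin_exp_ineq) auto
    show "0 \<le> J x0 * sqrt (B x)" using J_pos[of x0] B_nonneg[of x] by simp
  qed
  also have "\<dots> = K x"
    by (simp add: K_eq fJ_def algebra_simps flip: exp_add)
  finally show ?thesis .
qed

end

lemma cont_vec_nth[continuous_intros]: "continuous F f \<Longrightarrow> continuous F (\<lambda>x. f x $ i)"
  unfolding continuous_def by (rule tendsto_vec_nth)

lemma cont_on_vec_nth[continuous_intros]: "continuous_on S f \<Longrightarrow> continuous_on S (\<lambda>x. f x $ i)"
  unfolding continuous_on_def by (auto intro: tendsto_vec_nth)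

lemma has_derivative_vec_nth[derivative_intros]:
  "(f has_derivative f') F \<Longrightarrow> ((\<lambda>x. f x $ i) has_derivative (\<lambda>x. f' x $ i)) F"
  by (rule bounded_linear.has_derivative[OF bounded_linear_vec_nth])

context fins begin

lemma q_isCont: "isCont q x"
  unfolding q_eq bl_def by (intro continuous_intros continuous_ident)

lemma B_isCont: "isCont B x"
  unfolding fB_def by (intro continuous_intros continuous_ident q_isCont)

lemma A_isCont: "isCont A x"
  unfolding fA_def by (intro continuous_intros continuous_ident q_isCont) simp

lemma pv_isCont: "isCont pv x"
  by (rule linear_continuous_at) (simp add: linear_pv flip: linear_conv_bounded_linear)

lemma q_cont_on: "continuous_on S q"
  by (rule continuous_at_imp_continuous_on) (auto intro: q_isCont)

lemma A_cont_on: "continuous_on S A"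
  by (rule continuous_at_imp_continuous_on) (auto intro: A_isCont)

lemma open_qpos: "open {x. 0 < q x}"
  by (rule open_Collect_less[OF continuous_on_const q_cont_on])

lemma open_Apos: "open {x. 0 < A x}"
  by (rule open_Collect_less[OF continuous_on_const A_cont_on])

lemma open_Aneg: "open {x. A x < 0}"
  by (rule open_Collect_less[OF A_cont_on continuous_on_const])

lemma Phi_cont: assumes x: "x \<noteq> 0" shows "isCont Phi x"
proof -
  consider "q x > 0" | "q x = 0" "A x > 0" | "q x = 0" "A x < 0"
  proof -
    show ?thesis
    proof (cases "q x > 0")
      case True thus ?thesis using that(1) by blast
    next
      case False
      hence q0: "q x = 0" using q_nonneg[of x] by linarith
      hence "A x \<noteq> 0" using nonzero_cases[OF x] A_q0[of x] by auto
      hence "A x > 0 \<or> A x < 0" by linarith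
      thus ?thesis using that(2,3) q0 by blast
    qed
  qed
  thus ?thesis
  proof cases
    case 1
    have ev: "eventually (\<lambda>y. y \<in> {y. 0 < q y}) (nhds x)"
      using eventually_nhds_in_open[OF open_qpos] 1 by auto
    have "eventually (\<lambda>y. (\<lambda>y. arctan (A y / (h * q y))) y = Phi y) (nhds x)"
      by (rule eventually_mono[OF ev]) (simp add: fPhi_def)
    moreover have "isCont (\<lambda>y. arctan (A y / (h * q y))) x"
      using 1 h_pos by (intro continuous_intros q_isCont A_isCont) auto
    ultimately show ?thesis by (rule isCont_cong[THEN iffD1])
  next
    case 2
    have ev: "eventually (\<lambda>y. y \<in> {y. 0 < A y}) (nhds x)"
      using eventually_nhds_in_open[OF open_Apos] 2 by auto
    have "eventually (\<lambda>y. (\<lambda>y. pi/2 - arctan (h * q y / A y)) y = Phi y) (nhds x)"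
      by (rule eventually_mono[OF ev]) (simp add: Phi_alt_pos)
    moreover have "isCont (\<lambda>y. pi/2 - arctan (h * q y / A y)) x"
      using 2 by (intro continuous_intros q_isCont A_isCont) auto
    ultimately show ?thesis by (rule isCont_cong[THEN iffD1])
  next
    case 3
    have ev: "eventually (\<lambda>y. y \<in> {y. A y < 0}) (nhds x)"
      using eventually_nhds_in_open[OF open_Aneg] 3 by auto
    have "eventually (\<lambda>y. (\<lambda>y. - (pi/2) - arctan (h * q y / A y)) y = Phi y) (nhds x)"
      by (rule eventually_mono[OF ev]) (simp add: Phi_alt_neg)
    moreover have "isCont (\<lambda>y. - (pi/2) - arctan (h * q y / A y)) x"
      using 3 by (intro continuous_intros q_isCont A_isCont) auto
    ultimately show ?thesis by (rule isCont_cong[THEN iffD1])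
  qed
qed

lemma K_eq2: "K x = sqrt (B x) * exp (G * Phi x / 2)"
  by (simp add: K_eq fJ_def)

lemma J_le: "J x \<le> exp (\<bar>G\<bar> * pi / 4)"
proof -
  have "G * Phi x / 2 \<le> \<bar>G\<bar> * pi / 4"
  proof -
    have "\<bar>Phi x\<bar> \<le> pi/2" using Phi_bounds[of x] by auto
    hence "\<bar>G\<bar> * \<bar>Phi x\<bar> \<le> \<bar>G\<bar> * (pi/2)" by (rule mult_left_mono) auto
    hence "\<bar>G * Phi x\<bar> \<le> \<bar>G\<bar> * (pi/2)" by (simp add: abs_mult)
    thus ?thesis by (simp add: abs_le_iff)
  qed
  thus ?thesis by (simp add: fJ_def)
qed

lemma K_cont: "isCont K x"
proof (cases "x = 0")
  case False
  have "isCont (\<lambda>y. sqrt (B y) * exp (G * Phi y / 2)) x"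
    by (intro continuous_intros B_isCont isCont_o2[OF Phi_cont[OF False]]) simp
  thus ?thesis by (simp add: K_eq2[abs_def])
next
  case True
  have B0: "B 0 = 0" by (simp add: fB_def fq_def)
  have "isCont (\<lambda>y. sqrt (B y) * exp (\<bar>G\<bar> * pi / 4)) 0" by (intro continuous_intros B_isCont)
  hence lim: "((\<lambda>y. sqrt (B y) * exp (\<bar>G\<bar> * pi / 4)) \<longlongrightarrow> 0) (at 0)"
    unfolding isCont_def using B0 by simp
  have "(K \<longlongrightarrow> 0) (at 0)"
  proof (rule Lim_null_comparison[OF _ lim], rule always_eventually, rule allI)
    fix y
    have "norm (K y) = sqrt (B y) * J y" using K_nonneg[of y] K_eq[of y] by simp
    also have "\<dots> \<le> sqrt (B y) * exp (\<bar>G\<bar> * pi / 4)" using J_le[of y] B_nonneg[of y] by (intro mult_left_mono) auto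
    finally show "norm (K y) \<le> sqrt (B y) * exp (\<bar>G\<bar> * pi / 4)" .
  qed
  thus ?thesis using True K_zero unfolding isCont_def by simp
qed

lemma K_cont_on: "continuous_on S K"
  by (intro continuous_at_imp_continuous_on ballI K_cont)

lemma Wv_cont: "isCont Wv x"
  unfolding Wv_def[abs_def] by (intro continuous_intros continuous_ident pv_isCont q_isCont)

lemma grad_cont: "x \<noteq> 0 \<Longrightarrow> isCont grad x"
  unfolding grad_def[abs_def] using B_pos[of x]
  by (intro continuous_intros B_isCont K_cont Wv_cont) auto

end

lemma alg_phi:
  fixes a Q hh vz Z dq g BB :: real
  assumes "hh > 0" "Q > 0" "a = Z + g*Q/2" "BB = a\<^sup>2 + hh\<^sup>2 * Q\<^sup>2"
  shows "((vz + g * dq / 2) * (hh*Q) - a * (hh*dq)) / ((hh*Q)*(hh*Q)) * inverse (1 + (a/(hh*Q))\<^sup>2) = hh*(Q * vz - Z*dq)/BB"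
proof -
  have BBp: "BB > 0" using assms by (simp add: add_nonneg_pos)
  have hQ: "hh * Q > 0" using assms by simp
  have "1 + (a/(hh*Q))\<^sup>2 = BB / (hh*Q)\<^sup>2" using assms hQ by (simp add: field_simps power2_eq_square)
  hence i: "inverse (1 + (a/(hh*Q))\<^sup>2) = (hh*Q)\<^sup>2 / BB" using BBp assms by simp
  have N: "(vz + g * dq / 2) * (hh*Q) - a * (hh*dq) = hh*(Q * vz - Z*dq)" using assms(3) by (simp add: algebra_simps)
  have "((vz + g * dq / 2) * (hh*Q) - a * (hh*dq)) / ((hh*Q)*(hh*Q)) * inverse (1 + (a/(hh*Q))\<^sup>2)
      = (hh*(Q * vz - Z*dq)) / ((hh*Q)*(hh*Q)) * ((hh*Q)*(hh*Q) / BB)" unfolding N i by (simp add: power2_eq_square)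
  also have "\<dots> = hh*(Q * vz - Z*dq)/BB" using hQ assms(1,2) by simp
  finally show ?thesis .
qed

lemma aux_s: "(s::real) > 0 \<Longrightarrow> s * E / (s * s) * X = E / s * X"
  by (simp add: field_simps)

context fins begin

lemma dQ: "((\<lambda>y. bl y y) has_derivative (\<lambda>v. 2 * bl x v)) (at x)"
proof -
  have "((\<lambda>y. pv y \<bullet> y) has_derivative (\<lambda>v. pv x \<bullet> v + pv v \<bullet> x)) (at x)"
    by (rule has_derivative_inner[OF linear_imp_has_derivative[OF linear_pv] has_derivative_ident])
  moreover have "(\<lambda>y. pv y \<bullet> y) = (\<lambda>y. bl y y)" by (simp add: pv_inner)
  moreover have "(\<lambda>v. pv x \<bullet> v + pv v \<bullet> x) = (\<lambda>v. 2 * bl x v)" by (simp add: pv_inner bl_sym)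
  ultimately show ?thesis by simp
qed

lemma dq: assumes "q x > 0" shows "(q has_derivative (\<lambda>v. bl x v / q x)) (at x)"
proof -
  have bp: "bl x x > 0" using assms q_sq[of x] by (metis zero_less_power2 less_irrefl)
  have "((\<lambda>y. sqrt (bl y y)) has_derivative (\<lambda>v. 2 * bl x v * (inverse (sqrt (bl x x)) / 2))) (at x)"
    by (rule has_derivative_real_sqrt[OF bp dQ])
  moreover have "(\<lambda>y. sqrt (bl y y)) = q" by (simp add: q_eq[abs_def])
  moreover have "(\<lambda>v. 2 * bl x v * (inverse (sqrt (bl x x)) / 2)) = (\<lambda>v. bl x v / q x)"
    by (simp add: q_eq field_simps)
  ultimately show ?thesis by simp
qed

lemma dA: assumes "q x > 0" shows "(A has_derivative (\<lambda>v. v$z + g * (bl x v / q x) / 2)) (at x)"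
proof -
  have "((\<lambda>y. y$z + g * q y / 2) has_derivative (\<lambda>v. v$z + g * (bl x v / q x) / 2)) (at x)"
    by (auto intro!: derivative_eq_intros dq[OF assms])
  thus ?thesis by (simp add: fA_def[abs_def])
qed

lemma dB: assumes "q x > 0"
  shows "(B has_derivative (\<lambda>v. 2 * x$z * v$z + g * ((bl x v / q x) * x$z + q x * v$z) + 2 * q x * (bl x v / q x))) (at x)"
proof -
  have "((\<lambda>y. y$z * y$z + g * q y * y$z + q y * q y) has_derivative
     (\<lambda>v. 2 * x$z * v$z + g * ((bl x v / q x) * x$z + q x * v$z) + 2 * q x * (bl x v / q x))) (at x)"
    by (auto intro!: derivative_eq_intros dq[OF assms] simp: algebra_simps)
  thus ?thesis by (simp add: fB_def[abs_def] power2_eq_square)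
qed

lemma dPhi: assumes qp: "q x > 0"
  shows "(Phi has_derivative (\<lambda>v. h * (q x * v$z - x$z * (bl x v / q x)) / B x)) (at x)"
proof -
  have hq: "h * q x \<noteq> 0" using qp h_pos by simp
  have d: "((\<lambda>y. arctan (A y / (h * q y))) has_derivative
     (\<lambda>v. ((v$z + g * (bl x v / q x) / 2) * (h * q x) - A x * (h * (bl x v / q x))) / ((h * q x) * (h * q x))
          * inverse (1 + (A x / (h * q x))\<^sup>2))) (at x)"
    by (rule has_derivative_arctan[OF has_derivative_divide'[OF dA[OF qp] has_derivative_mult_right[OF dq[OF qp]] hq]])
  have e: "(\<lambda>v. ((v$z + g * (bl x v / q x) / 2) * (h * q x) - A x * (h * (bl x v / q x))) / ((h * q x) * (h * q x))
          * inverse (1 + (A x / (h * q x))\<^sup>2)) = (\<lambda>v. h * (q x * v$z - x$z * (bl x v / q x)) / B x)"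
    by (rule ext, rule alg_phi) (use h_pos qp in \<open>auto simp: fA_def B_eq\<close>)
  have "((\<lambda>y. arctan (A y / (h * q y))) has_derivative (\<lambda>v. h * (q x * v$z - x$z * (bl x v / q x)) / B x)) (at x)"
    using d e by simp
  thus ?thesis
    by (rule has_derivative_transform_within_open[OF _ open_qpos]) (use qp in \<open>auto simp: fPhi_def\<close>)
qed

lemma dK: assumes qp: "q x > 0" shows "(K has_derivative (\<lambda>v. v \<bullet> grad x)) (at x)"
proof -
  have x0: "x \<noteq> 0" using qp by (auto simp: q_eq bl_def)
  have Bp: "B x > 0" by (rule B_pos[OF x0])
  define dq' where "dq' v = bl x v / q x" for v
  define dB' where "dB' v = 2 * x$z * v$z + g * (dq' v * x$z + q x * v$z) + 2 * q x * dq' v" for v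
  define dP where "dP v = h * (q x * v$z - x$z * dq' v) / B x" for v
  have dsB: "((\<lambda>y. sqrt (B y)) has_derivative (\<lambda>v. dB' v * (inverse (sqrt (B x)) / 2))) (at x)"
    using has_derivative_real_sqrt[OF Bp dB[OF qp]] by (simp add: dB'_def dq'_def)
  have dE: "((\<lambda>y. exp (G * Phi y / 2)) has_derivative (\<lambda>v. (G * dP v / 2) * exp (G * Phi x / 2))) (at x)"
    using has_derivative_exp[OF has_derivative_divide'[OF has_derivative_mult_right[OF dPhi[OF qp]] has_derivative_const]]
    by (simp add: dP_def dq'_def)
  have dprod: "((\<lambda>y. sqrt (B y) * exp (G * Phi y / 2)) has_derivative
      (\<lambda>v. sqrt (B x) * ((G * dP v / 2) * exp (G * Phi x / 2)) + dB' v * (inverse (sqrt (B x)) / 2) * exp (G * Phi x / 2))) (at x)"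
    by (rule has_derivative_mult[OF dsB dE])
  have e: "sqrt (B x) * ((G * dP v / 2) * exp (G * Phi x / 2)) + dB' v * (inverse (sqrt (B x)) / 2) * exp (G * Phi x / 2)
      = v \<bullet> grad x" for v
  proof -
    have s2: "sqrt (B x) * sqrt (B x) = B x" using Bp by simp
    have sp: "sqrt (B x) > 0" using Bp by simp
    have qdq: "q x * dq' v = bl x v" using qp by (simp add: dq'_def)
    have "v \<bullet> grad x = sqrt (B x) * exp (G * Phi x / 2) / B x * (bl x v + (x$z + g * q x) * v$z)"
      by (simp add: grad_def inner_Wv K_eq2)
    also have "\<dots> = exp (G * Phi x / 2) / sqrt (B x) * (bl x v + (x$z + g * q x) * v$z)"
      using aux_s[OF sp, of "exp (G * Phi x / 2)" "bl x v + (x$z + g * q x) * v$z"] s2 by simp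
    finally have t: "v \<bullet> grad x = exp (G * Phi x / 2) / sqrt (B x) * (bl x v + (x$z + g * q x) * v$z)" .
    have Gh': "G * (h * w) = g * w" for w using Gh by (simp add: mult.assoc[symmetric])
    have GhB: "sqrt (B x) * (G * dP v / 2) = (g * (q x * v$z - x$z * dq' v) / 2) / sqrt (B x)"
      using s2 sp by (simp add: dP_def field_simps Gh')
    have L1: "sqrt (B x) * ((G * dP v / 2) * exp (G * Phi x / 2)) = (sqrt (B x) * (G * dP v / 2)) * exp (G * Phi x / 2)"
      by (simp only: mult.assoc)
    have "sqrt (B x) * ((G * dP v / 2) * exp (G * Phi x / 2)) + dB' v * (inverse (sqrt (B x)) / 2) * exp (G * Phi x / 2)
       = ((g * (q x * v$z - x$z * dq' v) / 2) / sqrt (B x)) * exp (G * Phi x / 2) + dB' v * (inverse (sqrt (B x)) / 2) * exp (G * Phi x / 2)"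
      unfolding L1 GhB ..
    also have "\<dots> = exp (G * Phi x / 2) / sqrt (B x) * ((g * (q x * v$z - x$z * dq' v) / 2) + dB' v / 2)"
      using sp by (simp add: field_simps)
    also have "(g * (q x * v$z - x$z * dq' v) / 2) + dB' v / 2 = bl x v + (x$z + g * q x) * v$z"
      unfolding qdq[symmetric] by (simp add: dB'_def field_simps)
    finally show ?thesis using t by simp
  qed
  show ?thesis using dprod e by (simp add: K_eq2[abs_def])
qed

end

lemma alg_hess:
  fixes K B Z q g bl vz P E PV :: real
  assumes Bd: "B = Z\<^sup>2 + g * q * Z + q\<^sup>2" and Bp: "B > 0" and qp: "q > 0"
  shows "(K / B) * (PV + (vz + g * (bl / q)) * E)
         + (((K / B) * (bl + (Z + g * q) * vz) * B - K * (2 * Z * vz + g * ((bl / q) * Z + q * vz) + 2 * q * (bl / q))) / (B * B)) * (P + (Z + g * q) * E)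
   = (K / B) * ((1 / B) * ((bl + (Z + g * q) * vz) * (P + (Z + g * q) * E))
       - ((2 * Z + g * q) / B) * (vz * P + bl * E + (Z + g * q) * (vz * E))
       - ((g * Z + 2 * q) / B) * ((bl / q) * P) + vz * E + PV)"
  using Bp qp
  apply (simp add: field_simps)
  apply (simp add: algebra_simps power2_eq_square Bd)
  done

definition outer :: "real^'n \<Rightarrow> real^'n \<Rightarrow> real^'n^'n" where
  "outer a b = (\<chi> i j. a$i * b$j)"

lemma outer_mv: "outer a b *v v = (b \<bullet> v) *\<^sub>R a"
  by (simp add: vec_eq_iff outer_def matrix_vector_mult_def inner_vec_def sum_distrib_left sum_distrib_right mult_ac)

context fins begin

definition pq :: "real^'n \<Rightarrow> real^'n^'n" where
  "pq y = (\<chi> i j. pv y $ i * pv y $ j / q y)"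

definition Py :: "real^'n^'n" where
  "Py = (\<chi> i j. if i \<noteq> z \<and> j \<noteq> z then r i j else 0)"

definition Mh :: "real^'n \<Rightarrow> real^'n^'n" where
  "Mh y = (1 / B y) *\<^sub>R outer (Wv y) (Wv y)
     - ((2 * y$z + g * q y) / B y) *\<^sub>R (outer (pv y) ez + outer ez (pv y) + (y$z + g * q y) *\<^sub>R outer ez ez)
     - ((g * y$z + 2 * q y) / B y) *\<^sub>R pq y + outer ez ez + Py"

definition hess :: "real^'n \<Rightarrow> real^'n^'n" where
  "hess y = (K y / B y) *\<^sub>R Mh y"

lemma pq_mv: "pq y *v v = ((pv y \<bullet> v) / q y) *\<^sub>R pv y"
  by (simp add: vec_eq_iff pq_def matrix_vector_mult_def inner_vec_def sum_divide_distrib sum_distrib_left sum_distrib_right mult_ac)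

lemma Py_mv: "Py *v v = pv v"
proof -
  have "(Py *v v) $ i = pv v $ i" for i
  proof (cases "i = z")
    case True thus ?thesis by (simp add: Py_def matrix_vector_mult_def pv_def)
  next
    case False
    have "(Py *v v) $ i = (\<Sum>j\<in>UNIV. (if j \<noteq> z then r i j else 0) * v$j)"
      using False by (simp add: Py_def matrix_vector_mult_def)
    also have "\<dots> = (\<Sum>j\<in>-{z}. (if j \<noteq> z then r i j else 0) * v$j)"
      by (rule sum.mono_neutral_right) auto
    also have "\<dots> = pv v $ i" using False by (simp add: pv_def)
    finally show ?thesis .
  qed
  thus ?thesis by (simp add: vec_eq_iff)
qed

lemma hess_mv: "hess y *v v = (K y / B y) *\<^sub>R (
     ((Wv y \<bullet> v) / B y) *\<^sub>R Wv y
     - ((2 * y$z + g * q y) / B y) *\<^sub>R ((v$z) *\<^sub>R pv y + (pv y \<bullet> v) *\<^sub>R ez + ((y$z + g * q y) * v$z) *\<^sub>R ez)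
     - ((g * y$z + 2 * q y) / B y) *\<^sub>R (((pv y \<bullet> v) / q y) *\<^sub>R pv y) + (v$z) *\<^sub>R ez + pv v)"
  unfolding hess_def Mh_def
  by (simp add: matrix_vector_mult_add_rdistrib matrix_vector_mult_diff_rdistrib
      scaleR_matrix_vector_assoc[symmetric] outer_mv pq_mv Py_mv ez_inner)

lemma Wv_comp: "Wv y $ i = pv y $ i + (y$z + g * q y) * ez $ i"
  by (simp add: Wv_def)

lemma dW: assumes "q x > 0" shows "(Wv has_derivative (\<lambda>v. pv v + (v$z + g * (bl x v / q x)) *\<^sub>R ez)) (at x)"
proof -
  have "((\<lambda>y. pv y + (y$z + g * q y) *\<^sub>R ez) has_derivative (\<lambda>v. pv v + (v$z + g * (bl x v / q x)) *\<^sub>R ez)) (at x)"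
    by (auto intro!: derivative_eq_intros linear_imp_has_derivative[OF linear_pv] dq[OF assms])
  thus ?thesis by (simp add: Wv_def[abs_def])
qed

lemma dgrad: assumes qp: "q x > 0" shows "(grad has_derivative (\<lambda>v. hess x *v v)) (at x)"
proof -
  have x0: "x \<noteq> 0" using qp by (auto simp: q_eq bl_def)
  have Bp: "B x > 0" by (rule B_pos[OF x0])
  define dB' where "dB' v = 2 * x$z * v$z + g * ((bl x v / q x) * x$z + q x * v$z) + 2 * q x * (bl x v / q x)" for v
  have d1: "((\<lambda>y. K y / B y) has_derivative (\<lambda>v. ((v \<bullet> grad x) * B x - K x * dB' v) / (B x * B x))) (at x)"
    using has_derivative_divide'[OF dK[OF qp] dB[OF qp]] Bp by (simp add: dB'_def)
  have d2: "((\<lambda>y. (K y / B y) *\<^sub>R Wv y) has_derivative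
      (\<lambda>v. (K x / B x) *\<^sub>R (pv v + (v$z + g * (bl x v / q x)) *\<^sub>R ez) + (((v \<bullet> grad x) * B x - K x * dB' v) / (B x * B x)) *\<^sub>R Wv x)) (at x)"
    by (rule has_derivative_scaleR[OF d1 dW[OF qp]])
  have e: "(K x / B x) *\<^sub>R (pv v + (v$z + g * (bl x v / q x)) *\<^sub>R ez) + (((v \<bullet> grad x) * B x - K x * dB' v) / (B x * B x)) *\<^sub>R Wv x
      = hess x *v v" for v
  proof -
    have vg: "v \<bullet> grad x = (K x / B x) * (bl x v + (x$z + g * q x) * v$z)"
      by (simp add: grad_def inner_Wv)
    show ?thesis
      unfolding hess_mv vec_eq_iff
    proof
      fix i
      show "((K x / B x) *\<^sub>R (pv v + (v$z + g * (bl x v / q x)) *\<^sub>R ez) + (((v \<bullet> grad x) * B x - K x * dB' v) / (B x * B x)) *\<^sub>R Wv x) $ i =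
        ((K x / B x) *\<^sub>R (((Wv x \<bullet> v) / B x) *\<^sub>R Wv x
          - ((2 * x$z + g * q x) / B x) *\<^sub>R ((v$z) *\<^sub>R pv x + (pv x \<bullet> v) *\<^sub>R ez + ((x$z + g * q x) * v$z) *\<^sub>R ez)
          - ((g * x$z + 2 * q x) / B x) *\<^sub>R (((pv x \<bullet> v) / q x) *\<^sub>R pv x) + (v$z) *\<^sub>R ez + pv v)) $ i"
      proof -
        let ?Z = "x$z" and ?q = "q x" and ?K = "K x" and ?B = "B x" and ?bl = "bl x v" and ?vz = "v$z"
          and ?P = "pv x $ i" and ?E = "ez $ i" and ?PV = "pv v $ i"
        have L: "((K x / B x) *\<^sub>R (pv v + (v$z + g * (bl x v / q x)) *\<^sub>R ez) + (((v \<bullet> grad x) * B x - K x * dB' v) / (B x * B x)) *\<^sub>R Wv x) $ i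
          = (?K / ?B) * (?PV + (?vz + g * (?bl / ?q)) * ?E)
         + (((?K / ?B) * (?bl + (?Z + g * ?q) * ?vz) * ?B - ?K * (2 * ?Z * ?vz + g * ((?bl / ?q) * ?Z + ?q * ?vz) + 2 * ?q * (?bl / ?q))) / (?B * ?B)) * (?P + (?Z + g * ?q) * ?E)"
          using Bp qp by (simp add: vg Wv_def dB'_def)
        have R: "((K x / B x) *\<^sub>R (((Wv x \<bullet> v) / B x) *\<^sub>R Wv x
          - ((2 * x$z + g * q x) / B x) *\<^sub>R ((v$z) *\<^sub>R pv x + (pv x \<bullet> v) *\<^sub>R ez + ((x$z + g * q x) * v$z) *\<^sub>R ez)
          - ((g * x$z + 2 * q x) / B x) *\<^sub>R (((pv x \<bullet> v) / q x) *\<^sub>R pv x) + (v$z) *\<^sub>R ez + pv v)) $ i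
          = (?K / ?B) * ((1 / ?B) * ((?bl + (?Z + g * ?q) * ?vz) * (?P + (?Z + g * ?q) * ?E))
       - ((2 * ?Z + g * ?q) / ?B) * (?vz * ?P + ?bl * ?E + (?Z + g * ?q) * (?vz * ?E))
       - ((g * ?Z + 2 * ?q) / ?B) * ((?bl / ?q) * ?P) + ?vz * ?E + ?PV)"
          using Bp qp by (simp add: Wv_inner pv_inner Wv_comp mult.assoc)
        have Bd: "B x = (x$z)\<^sup>2 + g * q x * x$z + (q x)\<^sup>2" by (simp add: fB_def)
        show ?thesis unfolding L R by (rule alg_hess[OF Bd Bp qp])
      qed
    qed
  qed
  show ?thesis using d2 e by (simp add: grad_def[abs_def])
qed

end

lemma mat_cont:
  fixes f :: "'a::t2_space \<Rightarrow> real^'n^'m"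
  assumes "\<And>i j. isCont (\<lambda>y. f y $ i $ j) x"
  shows "isCont f x"
proof -
  have "((\<lambda>y. \<chi> i. \<chi> j. f y $ i $ j) \<longlongrightarrow> (\<chi> i. \<chi> j. f x $ i $ j)) (at x)"
    using assms unfolding isCont_def by (intro tendsto_vec_lambda) auto
  thus ?thesis unfolding isCont_def by (simp add: vec_lambda_eta)
qed

lemma outer_cont: assumes "isCont a x" "isCont b x" shows "isCont (\<lambda>y. outer (a y) (b y)) x"
proof (rule mat_cont)
  fix i j
  have "(\<lambda>y. outer (a y) (b y) $ i $ j) = (\<lambda>y. a y $ i * b y $ j)" by (simp add: outer_def)
  moreover have "isCont (\<lambda>y. a y $ i * b y $ j) x" using assms by (intro continuous_intros)
  ultimately show "isCont (\<lambda>y. outer (a y) (b y) $ i $ j) x" by simp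
qed

lemma norm_mv_le: fixes M :: "real^'n^'m" shows "norm (M *v v) \<le> (real CARD('m) * real CARD('n) * norm M) * norm v"
proof -
  have "\<bar>M $ i $ j\<bar> \<le> norm M" for i j
    using component_le_norm_cart[of "M $ i" j] Finite_Cartesian_Product.norm_nth_le[of M i] by linarith
  hence "onorm ((*v) M) \<le> real CARD('m) * real CARD('n) * norm M" by (rule onorm_le_matrix_component)
  moreover have "norm (M *v v) \<le> onorm ((*v) M) * norm v" by (rule onorm[OF matrix_vector_mul_bounded_linear])
  ultimately show ?thesis by (meson mult_right_mono norm_ge_zero order_trans)
qed

context fins begin

lemma pq_entry_cont: "isCont (\<lambda>y. pv y $ i * pv y $ j / q y) x"
proof (cases "q x > 0")
  case True
  thus ?thesis by (intro continuous_intros pv_isCont q_isCont) auto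
next
  case False
  hence q0: "q x = 0" using q_nonneg[of x] by simp
  hence p0: "pv x = 0" using q_zero_iff pv_zero_if by blast
  define ci where "ci = sqrt (bl (axis i 1) (axis i 1))"
  define cj where "cj = sqrt (bl (axis j 1) (axis j 1))"
  have ci: "ci \<ge> 0" "cj \<ge> 0" using bl_nonneg by (auto simp: ci_def cj_def)
  have bnd: "norm (pv y $ i * pv y $ j / q y) \<le> ci * cj * q y" for y
  proof (cases "q y = 0")
    case True thus ?thesis using ci q_nonneg[of y] by simp
  next
    case False
    hence qp: "q y > 0" using q_nonneg[of y] by simp
    have "\<bar>pv y $ i\<bar> \<le> ci * q y" "\<bar>pv y $ j\<bar> \<le> cj * q y"
      using pv_comp_bound[of y i] pv_comp_bound[of y j] by (auto simp: ci_def cj_def q_eq)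
    hence "\<bar>pv y $ i * pv y $ j\<bar> \<le> (ci * q y) * (cj * q y)"
      by (simp add: abs_mult mult_mono' ci)
    have "norm (pv y $ i * pv y $ j / q y) = \<bar>pv y $ i * pv y $ j\<bar> / q y" using qp by (simp add: abs_divide)
    also have "\<dots> \<le> (ci * q y) * (cj * q y) / q y"
      using divide_right_mono[OF \<open>\<bar>pv y $ i * pv y $ j\<bar> \<le> (ci * q y) * (cj * q y)\<close> less_imp_le[OF qp]] .
    also have "\<dots> = ci * cj * q y" using qp by (simp add: field_simps)
    finally show ?thesis .
  qed
  have "isCont (\<lambda>y. ci * cj * q y) x" by (intro continuous_intros q_isCont)
  hence "((\<lambda>y. ci * cj * q y) \<longlongrightarrow> 0) (at x)" using q0 unfolding isCont_def by simp
  hence "((\<lambda>y. pv y $ i * pv y $ j / q y) \<longlongrightarrow> 0) (at x)"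
    by (rule Lim_null_comparison[rotated]) (rule always_eventually, rule allI, rule bnd)
  thus ?thesis using p0 unfolding isCont_def by simp
qed

lemma pq_cont: "isCont pq x"
  by (rule mat_cont) (simp add: pq_def pq_entry_cont)

lemma hess_cont: assumes x: "x \<noteq> 0" shows "isCont hess x"
proof -
  have Bp: "B x \<noteq> 0" using B_pos[OF x] by simp
  have "isCont Mh x"
    unfolding Mh_def[abs_def]
    by (intro continuous_intros outer_cont Wv_cont pv_isCont pq_cont B_isCont q_isCont) (use Bp in auto)
  thus ?thesis unfolding hess_def[abs_def]
    by (intro continuous_intros K_cont B_isCont) (use Bp in auto)
qed

definition Tp :: "real^'n \<Rightarrow> real^'n" where "Tp y = y - (y$z) *\<^sub>R ez"

lemma Tp_linear: "linear Tp"
  by (rule linearI) (auto simp: Tp_def algebra_simps)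

lemma Tp_zero_iff: "Tp y = 0 \<longleftrightarrow> q y = 0"
proof -
  have "Tp y = 0 \<longleftrightarrow> (\<forall>a. a \<noteq> z \<longrightarrow> y$a = 0)"
    by (auto simp: Tp_def vec_eq_iff ez_def axis_def)
  thus ?thesis by (simp add: q_zero_iff)
qed

lemma exists_other: "\<exists>a. a \<noteq> z"
proof (rule ccontr)
  assume "\<not> (\<exists>a. a \<noteq> z)"
  hence "UNIV = {z}" by auto
  hence "card (UNIV :: 'n set) = card {z}" by (rule arg_cong)
  hence "CARD('n) = 1" by simp
  thus False using card by simp
qed

lemma Tp_w: "\<exists>w. Tp w \<noteq> 0"
proof -
  obtain a where a: "a \<noteq> z" using exists_other by blast
  have "axis a 1 $ a \<noteq> (0::real)" by simp
  hence "q (axis a 1) \<noteq> 0" using a q_zero_iff by blast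
  thus ?thesis using Tp_zero_iff by blast
qed

lemma dK_all: assumes x: "x \<noteq> 0" shows "(K has_derivative (\<lambda>v. v \<bullet> grad x)) (at x)"
proof (cases "q x > 0")
  case True thus ?thesis by (rule dK)
next
  case False
  hence q0: "q x = 0" using q_nonneg[of x] by simp
  obtain w where w: "Tp w \<noteq> 0" using Tp_w by blast
  show ?thesis
  proof (rule GL[OF Tp_linear _ w, where U="-{0}"])
    show "Tp x = 0" using q0 Tp_zero_iff by simp
    show "open (- {0::real^'n})" by auto
    show "x \<in> - {0}" using x by simp
    show "continuous_on (- {0}) K" by (rule K_cont_on)
    show "(K has_derivative (\<lambda>v. v \<bullet> grad y)) (at y)" if "y \<in> - {0}" "Tp y \<noteq> 0" for y
      using that Tp_zero_iff q_nonneg[of y] by (intro dK) (simp add: less_le)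
    show "bounded_linear (\<lambda>v. v \<bullet> grad x)" by (rule bounded_linear_inner_left)
    fix e :: real assume e: "e > 0"
    obtain d where d: "d > 0" "\<forall>y. dist y x < d \<longrightarrow> dist (grad y) (grad x) < e"
      using grad_cont[OF x] e unfolding continuous_at_eps_delta by blast
    show "\<exists>d>0. \<forall>y\<in>- {0}. Tp y \<noteq> 0 \<longrightarrow> norm (y - x) < d \<longrightarrow> (\<forall>v. norm (v \<bullet> grad y - v \<bullet> grad x) \<le> e * norm v)"
    proof (intro exI[of _ d] conjI d(1) ballI impI allI)
      fix y v assume "norm (y - x) < d"
      hence "norm (grad y - grad x) < e" using d(2) by (simp add: dist_norm)
      moreover have "norm (v \<bullet> grad y - v \<bullet> grad x) \<le> norm v * norm (grad y - grad x)"
        using Cauchy_Schwarz_ineq2[of v "grad y - grad x"] by (simp add: inner_diff_right)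
      ultimately show "norm (v \<bullet> grad y - v \<bullet> grad x) \<le> e * norm v"
        by (smt (verit) mult_left_mono norm_ge_zero mult.commute)
    qed
  qed
qed

lemma dgrad_all: assumes x: "x \<noteq> 0" shows "(grad has_derivative (\<lambda>v. hess x *v v)) (at x)"
proof (cases "q x > 0")
  case True thus ?thesis by (rule dgrad)
next
  case False
  hence q0: "q x = 0" using q_nonneg[of x] by simp
  obtain w where w: "Tp w \<noteq> 0" using Tp_w by blast
  define c where "c = real CARD('n) * real CARD('n)"
  have cp: "c > 0" by (simp add: c_def)
  show ?thesis
  proof (rule GL[OF Tp_linear _ w, where U="-{0}"])
    show "Tp x = 0" using q0 Tp_zero_iff by simp
    show "open (- {0::real^'n})" by auto
    show "x \<in> - {0}" using x by simp
    show "continuous_on (- {0}) grad" by (intro continuous_at_imp_continuous_on ballI grad_cont) auto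
    show "(grad has_derivative (\<lambda>v. hess y *v v)) (at y)" if "y \<in> - {0}" "Tp y \<noteq> 0" for y
      using that Tp_zero_iff q_nonneg[of y] by (intro dgrad) (simp add: less_le)
    show "bounded_linear (\<lambda>v. hess x *v v)" by simp
    fix e :: real assume e: "e > 0"
    obtain d where d: "d > 0" "\<forall>y. dist y x < d \<longrightarrow> dist (hess y) (hess x) < e / c"
      using hess_cont[OF x] e cp divide_pos_pos[OF e cp] unfolding continuous_at_eps_delta by blast
    show "\<exists>d>0. \<forall>y\<in>- {0}. Tp y \<noteq> 0 \<longrightarrow> norm (y - x) < d \<longrightarrow> (\<forall>v. norm (hess y *v v - hess x *v v) \<le> e * norm v)"
    proof (intro exI[of _ d] conjI d(1) ballI impI allI)
      fix y v assume "norm (y - x) < d"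
      hence n: "norm (hess y - hess x) < e / c" using d(2) by (simp add: dist_norm)
      have "norm (hess y *v v - hess x *v v) = norm ((hess y - hess x) *v v)"
        by (simp add: matrix_vector_mult_diff_rdistrib)
      also have "\<dots> \<le> (c * norm (hess y - hess x)) * norm v" using norm_mv_le[of "hess y - hess x" v] by (simp add: c_def)
      also have "\<dots> \<le> e * norm v"
      proof (rule mult_right_mono)
        show "c * norm (hess y - hess x) \<le> e" using n cp by (simp add: field_simps)
      qed simp
      finally show "norm (hess y *v v - hess x *v v) \<le> e * norm v" .
    qed
  qed
qed

end

lemma alg_sff:
  fixes B Z q g b vz Qv :: real
  assumes Bd: "B = Z\<^sup>2 + g * q * Z + q\<^sup>2" and Bp: "B > 0" and qp: "q > 0"
    and hb: "b = - ((Z + g * q) * vz)" and cs: "b\<^sup>2 \<le> q\<^sup>2 * Qv" and Qn: "Qv \<ge> 0"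
    and g1: "-2 < g" and g2: "g < 2" and nz: "vz \<noteq> 0 \<or> Qv > 0"
  shows "- ((2 * Z + g * q) / B) * (vz * b + b * vz + (Z + g * q) * (vz * vz)) - ((g * Z + 2 * q) / B) * ((b / q) * b) + vz * vz + Qv > 0"
proof -
  define s where "s = Z + g * q"
  have key: "(2 * Z + g * q) * q - (g * Z + 2 * q) * s = - g * B"
    unfolding Bd s_def by (simp add: power2_eq_square algebra_simps)
  have "- ((2 * Z + g * q) / B) * (vz * b + b * vz + (Z + g * q) * (vz * vz)) - ((g * Z + 2 * q) / B) * ((b / q) * b)
      = s * vz\<^sup>2 * ((2 * Z + g * q) * q - (g * Z + 2 * q) * s) / (q * B)"
    using Bp qp unfolding hb s_def[symmetric] by (simp add: field_simps power2_eq_square)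
  also have "\<dots> = - g * s * vz\<^sup>2 / q" unfolding key using Bp qp by (simp add: field_simps)
  finally have id: "- ((2 * Z + g * q) / B) * (vz * b + b * vz + (Z + g * q) * (vz * vz)) - ((g * Z + 2 * q) / B) * ((b / q) * b) + vz * vz + Qv
      = vz\<^sup>2 * (1 - g * s / q) + Qv" by (simp add: field_simps power2_eq_square)
  show ?thesis
  proof (cases "vz = 0")
    case True show ?thesis unfolding id using True nz by simp
  next
    case False
    have "s\<^sup>2 * vz\<^sup>2 \<le> q\<^sup>2 * Qv" using cs unfolding hb s_def[symmetric] by (simp add: power_mult_distrib)
    hence Qlow: "Qv \<ge> s\<^sup>2 * vz\<^sup>2 / q\<^sup>2" using qp by (simp add: field_simps)
    have pos: "q\<^sup>2 - g * s * q + s\<^sup>2 > 0"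
    proof -
      have "q\<^sup>2 - g * s * q + s\<^sup>2 = (s - g * q / 2)\<^sup>2 + (1 - g\<^sup>2 / 4) * q\<^sup>2"
        by (simp add: power2_eq_square algebra_simps)
      moreover have "(2 - g) * (2 + g) > 0" using g1 g2 by simp
      hence "1 - g\<^sup>2 / 4 > 0" by (simp add: power2_eq_square algebra_simps)
      hence "(1 - g\<^sup>2 / 4) * q\<^sup>2 > 0" using qp by simp
      ultimately show ?thesis by (smt (verit) zero_le_power2)
    qed
    have "vz\<^sup>2 * (1 - g * s / q) + Qv \<ge> vz\<^sup>2 * (1 - g * s / q) + s\<^sup>2 * vz\<^sup>2 / q\<^sup>2" using Qlow by simp
    also have "vz\<^sup>2 * (1 - g * s / q) + s\<^sup>2 * vz\<^sup>2 / q\<^sup>2 = vz\<^sup>2 * (q\<^sup>2 - g * s * q + s\<^sup>2) / q\<^sup>2"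
      using qp by (simp add: field_simps power2_eq_square)
    finally have "vz\<^sup>2 * (1 - g * s / q) + Qv \<ge> vz\<^sup>2 * (q\<^sup>2 - g * s * q + s\<^sup>2) / q\<^sup>2" .
    moreover have "vz\<^sup>2 * (q\<^sup>2 - g * s * q + s\<^sup>2) / q\<^sup>2 > 0" using False pos qp by simp
    ultimately show ?thesis using id by linarith
  qed
qed

context fins begin

lemma sff_pos:
  assumes x: "x \<noteq> 0" and v: "v \<noteq> 0" and vg: "v \<bullet> grad x = 0"
  shows "v \<bullet> (hess x *v v) > 0"
proof -
  have Bp: "B x > 0" by (rule B_pos[OF x])
  have kp: "K x / B x > 0" using K_pos[OF x] Bp by simp
  have "v \<bullet> grad x = (K x / B x) * (bl x v + (x$z + g * q x) * v$z)" by (simp add: grad_def inner_Wv)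
  hence vW: "bl x v + (x$z + g * q x) * v$z = 0" using vg K_pos[OF x] Bp by simp
  have vW': "Wv x \<bullet> v = 0" using vW by (simp add: Wv_inner)
  define br where "br = - ((2 * x$z + g * q x) / B x) * (v$z * bl x v + bl x v * v$z + (x$z + g * q x) * (v$z * v$z))
      - ((g * x$z + 2 * q x) / B x) * ((bl x v / q x) * bl x v) + v$z * v$z + bl v v"
  have form: "v \<bullet> (hess x *v v) = (K x / B x) * br"
    unfolding hess_mv br_def
    by (simp add: vW' inner_add_right inner_diff_right inner_pv pv_inner inner_ez mult.assoc)
  have Qv: "bl v v \<ge> 0" by (rule bl_nonneg)
  have nz: "v$z \<noteq> 0 \<or> bl v v > 0"
  proof (rule ccontr)
    assume "\<not> (v$z \<noteq> 0 \<or> bl v v > 0)"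
    hence "v$z = 0" "bl v v = 0" using Qv by auto
    hence "\<forall>a. v$a = 0" using bl_zero_iff[of v] by metis
    thus False using v by (simp add: vec_eq_iff)
  qed
  have "br > 0"
  proof (cases "q x > 0")
    case True
    have cs: "(bl x v)\<^sup>2 \<le> (q x)\<^sup>2 * bl v v" using bl_CS[of x v] q_sq[of x] by simp
    show ?thesis unfolding br_def
      by (rule alg_sff[OF _ Bp True _ cs Qv gl gu nz]) (use vW in \<open>auto simp: fB_def algebra_simps\<close>)
  next
    case False
    hence q0: "q x = 0" using q_nonneg[of x] by simp
    have b0: "bl x v = 0" using q0 q_zero_iff bl_zero_if by blast
    have "x$z \<noteq> 0" using nonzero_cases[OF x] q0 by simp
    hence vz: "v$z = 0" using vW b0 q0 by simp
    hence "bl v v > 0" using nz by simp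
    thus ?thesis unfolding br_def using b0 vz q0 by simp
  qed
  thus ?thesis unfolding form using kp by (rule mult_pos_pos[OF _ _, rotated])
qed

end

context fins begin

lemma abs_GPhi: "\<bar>G * Phi x\<bar> \<le> \<bar>G\<bar> * (pi/2)"
proof -
  have "\<bar>Phi x\<bar> \<le> pi/2" using Phi_bounds[of x] by auto
  hence "\<bar>G\<bar> * \<bar>Phi x\<bar> \<le> \<bar>G\<bar> * (pi/2)" by (rule mult_left_mono) auto
  thus ?thesis by (simp add: abs_mult)
qed

lemma B_le_K: "B x \<le> (K x)\<^sup>2 * exp (\<bar>G\<bar> * (pi/2))"
proof -
  have e2: "exp (G * Phi x / 2) * exp (G * Phi x / 2) = exp (G * Phi x)" by (simp flip: exp_add)
  have K2: "(K x)\<^sup>2 = B x * exp (G * Phi x)"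
    using B_nonneg[of x] by (simp add: K_eq fJ_def power2_eq_square e2 algebra_simps)
  have "B x = (K x)\<^sup>2 * exp (- (G * Phi x))" unfolding K2 by (simp add: mult.assoc flip: exp_add)
  also have "\<dots> \<le> (K x)\<^sup>2 * exp (\<bar>G\<bar> * (pi/2))"
    using abs_GPhi[of x] by (intro mult_left_mono) auto
  finally show ?thesis .
qed

lemma Tp_z: "Tp y $ z = 0" by (simp add: Tp_def ez_def)

lemma bl_Tp: "bl (Tp y) (Tp y) = bl y y"
proof -
  have ez0: "bl ez w = 0" for w by (rule bl_zero_if) (simp add: ez_def axis_def)
  have ez0': "bl w ez = 0" for w using ez0 bl_sym by metis
  show ?thesis unfolding Tp_def by (simp add: bl_diff_left bl_diff_right bl_scale_left bl_scale_right ez0 ez0')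
qed

lemma lam_exists: "\<exists>l>0. \<forall>y. bl y y \<ge> l * (norm (Tp y))\<^sup>2"
proof -
  define S where "S = sphere (0::real^'n) 1 \<inter> {y. ez \<bullet> y = 0}"
  have cS: "compact S" unfolding S_def by (rule compact_Int_closed[OF compact_sphere closed_hyperplane])
  obtain a where a: "a \<noteq> z" using exists_other by blast
  have "axis a 1 $ z = (0::real)" using a by (simp add: axis_def)
  hence "axis a 1 \<in> S" by (simp add: S_def ez_inner)
  hence neS: "S \<noteq> {}" by blast
  have "continuous_on S (\<lambda>y. (q y)\<^sup>2)"
    by (intro continuous_at_imp_continuous_on ballI continuous_intros q_isCont)
  hence "continuous_on S (\<lambda>y. bl y y)" by (simp add: q_sq)
  then obtain m where m: "m \<in> S" "\<forall>y\<in>S. bl m m \<le> bl y y"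
    using continuous_attains_inf[OF cS neS] by blast
  have mz: "m$z = 0" "norm m = 1" using m(1) by (auto simp: S_def ez_inner)
  have "\<exists>a. a \<noteq> z \<and> m$a \<noteq> 0"
  proof (rule ccontr)
    assume "\<not> (\<exists>a. a \<noteq> z \<and> m$a \<noteq> 0)"
    hence "m = 0" using mz(1) by (metis vec_eq_iff zero_index)
    thus False using mz(2) by simp
  qed
  hence lp: "bl m m > 0" by (rule bl_pos)
  show ?thesis
  proof (intro exI[of _ "bl m m"] conjI lp allI)
    fix y
    show "bl m m * (norm (Tp y))\<^sup>2 \<le> bl y y"
    proof (cases "Tp y = 0")
      case True thus ?thesis using bl_nonneg[of y] by simp
    next
      case False
      define n where "n = norm (Tp y)"
      have np: "n > 0" using False by (simp add: n_def)
      define u where "u = (1 / n) *\<^sub>R Tp y"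
      have "u \<in> S" using np by (simp add: S_def u_def n_def ez_inner Tp_z)
      hence "bl m m \<le> bl u u" using m(2) by blast
      also have "bl u u = bl y y / n\<^sup>2" by (simp add: u_def bl_scale_left bl_scale_right bl_Tp power2_eq_square)
      finally show ?thesis using np by (simp add: n_def[symmetric] field_simps)
    qed
  qed
qed

lemma norm_le_Tp: "norm y \<le> norm (Tp y) + \<bar>y$z\<bar>"
proof -
  have "y = Tp y + (y$z) *\<^sub>R ez" by (simp add: Tp_def)
  hence "norm y \<le> norm (Tp y) + norm ((y$z) *\<^sub>R ez)" by (metis norm_triangle_ineq)
  thus ?thesis by (simp add: ez_def)
qed

lemma sq_le_imp: "(a::real)\<^sup>2 \<le> c \<Longrightarrow> \<bar>a\<bar> \<le> sqrt c"
  using real_sqrt_le_mono[of "a\<^sup>2" c] by simp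

lemma C_bounded: "bounded {x. K x \<le> 1}"
proof -
  obtain l where l: "l > 0" "\<forall>y. bl y y \<ge> l * (norm (Tp y))\<^sup>2" using lam_exists by blast
  define c0 where "c0 = exp (\<bar>G\<bar> * (pi/2)) / (1 - \<bar>g\<bar>/2)"
  have gp: "1 - \<bar>g\<bar>/2 > 0" using gl gu by simp
  show ?thesis
  proof (rule boundedI)
    fix x assume "x \<in> {x. K x \<le> 1}"
    hence K1: "K x \<le> 1" by simp
    have "(K x)\<^sup>2 \<le> 1" using K1 K_nonneg[of x] by (simp add: power_le_one)
    hence "B x \<le> exp (\<bar>G\<bar> * (pi/2))" using B_le_K[of x] by (smt (verit) exp_gt_zero mult_right_mono mult_cancel_right1)
    hence "(1 - \<bar>g\<bar>/2) * ((x$z)\<^sup>2 + (q x)\<^sup>2) \<le> exp (\<bar>G\<bar> * (pi/2))" using B_lower[of x] by linarith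
    hence s: "(x$z)\<^sup>2 + (q x)\<^sup>2 \<le> c0" using gp by (simp add: c0_def field_simps)
    have z2: "(x$z)\<^sup>2 \<le> c0" using s by (smt (verit) zero_le_power2)
    have "l * (norm (Tp x))\<^sup>2 \<le> c0" using l(2)[rule_format, of x] s q_sq[of x] by (smt (verit) zero_le_power2)
    hence n2: "(norm (Tp x))\<^sup>2 \<le> c0 / l" using l(1) by (simp add: field_simps)
    have "norm x \<le> norm (Tp x) + \<bar>x$z\<bar>" by (rule norm_le_Tp)
    also have "\<dots> \<le> sqrt (c0 / l) + sqrt c0"
      using sq_le_imp[OF n2] sq_le_imp[OF z2] by simp
    finally show "norm x \<le> sqrt (c0 / l) + sqrt c0" .
  qed
qed

lemma dir_deriv: assumes x: "x \<noteq> 0" shows "((\<lambda>t. K (x + t *\<^sub>R v)) has_real_derivative (v \<bullet> grad x)) (at 0)"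
proof -
  have d1: "((\<lambda>t. x + t *\<^sub>R v) has_derivative (\<lambda>t. t *\<^sub>R v)) (at 0)"
    by (auto intro!: derivative_eq_intros)
  have d2: "(K has_derivative (\<lambda>w. w \<bullet> grad x)) (at (x + (0::real) *\<^sub>R v))" using dK_all[OF x] by simp
  have "((\<lambda>t. K (x + t *\<^sub>R v)) has_derivative (\<lambda>t. (t *\<^sub>R v) \<bullet> grad x)) (at 0)"
    using has_derivative_compose[OF d1 d2] by simp
  moreover have "(\<lambda>t. (t *\<^sub>R v) \<bullet> grad x) = (*) (v \<bullet> grad x)" by (auto simp: fun_eq_iff)
  ultimately show ?thesis unfolding has_field_derivative_def by simp
qed

lemma main:
  "compact {R. K R = 1} \<and> {R. K R = 1} \<noteq> {}
    \<and> convex {R. K R \<le> 1} \<and> compact {R. K R \<le> 1} \<and> interior {R. K R \<le> 1} \<noteq> {} \<and> frontier {R. K R \<le> 1} = {R. K R = 1}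
    \<and> (\<exists>U grad hess. open U \<and> {R. K R = 1} \<subseteq> U
         \<and> (\<forall>x\<in>U. (K has_derivative (\<lambda>v. v \<bullet> grad x)) (at x)
                  \<and> (grad has_derivative (\<lambda>v. hess x *v v)) (at x))
         \<and> continuous_on U hess
         \<and> (\<forall>x\<in>{R. K R = 1}. grad x \<noteq> 0)
         \<and> (\<forall>x\<in>{R. K R = 1}. \<exists>e>0. \<forall>t. 0 < t \<and> t < e \<longrightarrow> x - t *\<^sub>R grad x \<in> interior {R. K R \<le> 1})
         \<and> (\<forall>x\<in>{R. K R = 1}. \<forall>v. v \<noteq> 0 \<and> v \<bullet> grad x = 0 \<longrightarrow> level_sff grad hess x v > 0))"
proof -
  let ?S = "{R. K R = 1}" and ?C = "{R. K R \<le> 1}"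
  have Kc: "continuous_on UNIV K" by (rule K_cont_on)
  have Sc: "closed ?S" by (rule closed_Collect_eq[OF Kc continuous_on_const])
  have Cc: "closed ?C" by (rule closed_Collect_le[OF Kc continuous_on_const])
  have Cb: "bounded ?C" by (rule C_bounded)
  have SC: "?S \<subseteq> ?C" by auto
  have S0: "x \<in> ?S \<Longrightarrow> x \<noteq> 0" for x using K_zero by auto
  have gnz: "grad x \<noteq> 0" if "x \<in> ?S" for x
  proof
    assume "grad x = 0"
    hence "x \<bullet> grad x = 0" by simp
    thus False using euler[OF S0[OF that]] that by simp
  qed
  have open_lt: "open {R. K R < 1}" by (rule open_Collect_less[OF Kc continuous_on_const])
  have int_eq: "interior ?C = {R. K R < 1}"
  proof
    show "{R. K R < 1} \<subseteq> interior ?C" by (rule interior_maximal[OF _ open_lt]) auto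
    show "interior ?C \<subseteq> {R. K R < 1}"
    proof
      fix x assume xi: "x \<in> interior ?C"
      hence xC: "K x \<le> 1" using interior_subset by blast
      show "x \<in> {R. K R < 1}"
      proof (rule ccontr)
        assume "x \<notin> {R. K R < 1}"
        hence xS: "K x = 1" using xC by simp
        hence x0: "x \<noteq> 0" using K_zero by auto
        obtain e where e: "e > 0" "ball x e \<subseteq> ?C" using xi mem_interior by blast
        have gp: "grad x \<bullet> grad x > 0" using gnz[of x] xS by simp
        obtain d where d: "d > 0" "\<forall>h>0. h < d \<longrightarrow> K (x + 0 *\<^sub>R grad x) < K (x + (0 + h) *\<^sub>R grad x)"
          using DERIV_pos_inc_right[OF dir_deriv[OF x0, of "grad x"] gp] by blast
        define h where "h = min d (e / norm (grad x)) / 2"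
        have np: "norm (grad x) > 0" using gnz[of x] xS by simp
        have hp: "h > 0" "h < d" using d(1) e(1) np by (auto simp: h_def)
        have m: "min d (e / norm (grad x)) \<le> e / norm (grad x)" by simp
        have ep: "e / norm (grad x) > 0" using e(1) np by simp
        have "h < e / norm (grad x)" unfolding h_def by (rule le_less_trans[OF divide_right_mono[OF m]]) (use ep in auto)
        hence "h * norm (grad x) < e" using np by (simp add: field_simps)
        hence "x + h *\<^sub>R grad x \<in> ball x e" using hp by (simp add: dist_norm)
        hence "K (x + h *\<^sub>R grad x) \<le> 1" using e(2) by blast
        moreover have "K x < K (x + h *\<^sub>R grad x)" using d(2) hp by simp
        ultimately show False using xS by simp
      qed
    qed
  qed
  have fr: "frontier ?C = ?S"
    unfolding frontier_def closure_closed[OF Cc] int_eq by auto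
  have cS: "compact ?S" using compact_eq_bounded_closed bounded_subset[OF Cb SC] Sc by blast
  have cC: "compact ?C" using compact_eq_bounded_closed Cb Cc by blast
  have Sne: "?S \<noteq> {}"
  proof -
    define p where "p = exp (- (G * pi / 4)) *\<^sub>R ez"
    have q0: "q p = 0" by (simp add: q_zero_iff p_def ez_def axis_def)
    have pz: "p$z = exp (- (G * pi / 4))" by (simp add: p_def ez_def)
    have "Phi p = pi/2" using q0 pz by (simp add: fPhi_def)
    moreover have "B p = (exp (- (G * pi / 4)))\<^sup>2" using q0 pz by (simp add: B_q0)
    ultimately have "K p = exp (- (G * pi / 4)) * exp (G * (pi/2) / 2)" by (simp add: K_eq2)
    also have "\<dots> = 1" by (simp flip: exp_add)
    finally show ?thesis by blast
  qed
  have Ceq: "?C = (\<Inter>x0\<in>-{0}. {x. grad x0 \<bullet> x \<le> 1})"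
  proof
    show "?C \<subseteq> (\<Inter>x0\<in>-{0}. {x. grad x0 \<bullet> x \<le> 1})"
      using support by (auto simp: inner_commute) (smt (verit) support inner_commute)
    show "(\<Inter>x0\<in>-{0}. {x. grad x0 \<bullet> x \<le> 1}) \<subseteq> ?C"
    proof
      fix x assume x: "x \<in> (\<Inter>x0\<in>-{0}. {x. grad x0 \<bullet> x \<le> 1})"
      show "x \<in> ?C"
      proof (cases "x = 0")
        case True thus ?thesis using K_zero by simp
      next
        case False
        hence "grad x \<bullet> x \<le> 1" using x by blast
        thus ?thesis using euler[OF False] by (simp add: inner_commute)
      qed
    qed
  qed
  have cvx: "convex ?C" unfolding Ceq by (intro convex_INT convex_halfspace_le)
  have intne: "interior ?C \<noteq> {}" unfolding int_eq using K_zero by (auto intro!: exI[of _ 0])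
  have ex: "\<exists>U grad hess. open U \<and> ?S \<subseteq> U
         \<and> (\<forall>x\<in>U. (K has_derivative (\<lambda>v. v \<bullet> grad x)) (at x)
                  \<and> (grad has_derivative (\<lambda>v. hess x *v v)) (at x))
         \<and> continuous_on U hess
         \<and> (\<forall>x\<in>?S. grad x \<noteq> 0)
         \<and> (\<forall>x\<in>?S. \<exists>e>0. \<forall>t. 0 < t \<and> t < e \<longrightarrow> x - t *\<^sub>R grad x \<in> interior ?C)
         \<and> (\<forall>x\<in>?S. \<forall>v. v \<noteq> 0 \<and> v \<bullet> grad x = 0 \<longrightarrow> level_sff grad hess x v > 0)"
  proof (intro exI[of _ "-{0}"] exI[of _ grad] exI[of _ hess] conjI ballI allI impI)
    show "open (- {0::real^'n})" by auto
    show "?S \<subseteq> - {0}" using S0 by auto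
    fix x assume "x \<in> - {0::real^'n}"
    hence x0: "x \<noteq> 0" by simp
    show "(K has_derivative (\<lambda>v. v \<bullet> grad x)) (at x)" by (rule dK_all[OF x0])
    show "(grad has_derivative (*v) (hess x)) (at x)" using dgrad_all[OF x0] by simp
  next
    show "continuous_on (- {0}) hess" by (intro continuous_at_imp_continuous_on ballI hess_cont) auto
  next
    fix x assume "x \<in> ?S" thus "grad x \<noteq> 0" by (rule gnz)
  next
    fix x assume xS: "x \<in> ?S"
    have x0: "x \<noteq> 0" by (rule S0[OF xS])
    have lt: "(- grad x) \<bullet> grad x < 0" using gnz[OF xS] by simp
    obtain d where d: "d > 0" "\<forall>h>0. h < d \<longrightarrow> K (x + 0 *\<^sub>R - grad x) > K (x + (0 + h) *\<^sub>R - grad x)"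
      using DERIV_neg_dec_right[OF dir_deriv[OF x0, of "- grad x"] lt] by blast
    show "\<exists>e>0. \<forall>t. 0 < t \<and> t < e \<longrightarrow> x - t *\<^sub>R grad x \<in> interior ?C"
    proof (intro exI[of _ d] conjI d(1) allI impI)
      fix t assume t: "0 < t \<and> t < d"
      hence "K (x - t *\<^sub>R grad x) < K x" using d(2) by simp
      thus "x - t *\<^sub>R grad x \<in> interior ?C" using xS unfolding int_eq by simp
    qed
  next
    fix x v assume xS: "x \<in> ?S" and v: "v \<noteq> 0 \<and> v \<bullet> grad x = 0"
    have "v \<bullet> (hess x *v v) > 0" using sff_pos[OF S0[OF xS]] v by blast
    moreover have "norm (grad x) > 0" using gnz[OF xS] by simp
    ultimately show "level_sff grad hess x v > 0" by (simp add: level_sff_def)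
  qed
  show ?thesis using cS Sne cvx cC intne fr ex by blast
qed

end

theorem theorem2p11:
  fixes z :: "'n::finite" and r :: "'n \<Rightarrow> 'n \<Rightarrow> real" and g :: real
  assumes "CARD('n) \<ge> 2"
    and "sym_posdef_off z r"
    and "-2 < g" and "g < 2"
  defines "K \<equiv> finsleroid_K z r g"
  defines "S \<equiv> {R. K R = 1}"
  defines "C \<equiv> {R. K R \<le> 1}"
  shows "compact S \<and> S \<noteq> {}
    \<and> convex C \<and> compact C \<and> interior C \<noteq> {} \<and> frontier C = S
    \<and> (\<exists>U grad hess. open U \<and> S \<subseteq> U
         \<and> (\<forall>x\<in>U. (K has_derivative (\<lambda>v. v \<bullet> grad x)) (at x)
                  \<and> (grad has_derivative (\<lambda>v. hess x *v v)) (at x))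
         \<and> continuous_on U hess
         \<and> (\<forall>x\<in>S. grad x \<noteq> 0)
         \<and> (\<forall>x\<in>S. \<exists>e>0. \<forall>t. 0 < t \<and> t < e \<longrightarrow> x - t *\<^sub>R grad x \<in> interior C)
         \<and> (\<forall>x\<in>S. \<forall>v. v \<noteq> 0 \<and> v \<bullet> grad x = 0 \<longrightarrow> level_sff grad hess x v > 0))"
proof -
  have "fins z r g" unfolding fins_def using assms by auto
  then interpret fins z r g .
  show ?thesis unfolding S_def C_def K_def by (rule main)
qed

end
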